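(* Let $L\in\mathbb R^{N\times N}$ be symmetric positive semidefinite with eigenvalues $\lambda_1\le\cdots\le\lambda_N$ and orthonormal eigenvectors $u_1,\dots,u_N$. Let $P\in\mathbb R^{n\times N}$ have full row rank, $P^+$ its Moore–Penrose pseudoinverse, $\Pi=P^+P$, $\Pi^\perp = I-\Pi$, and $L_c = (P^+)^\top LP^+$. Let $i$ be an index with $\lambda_i>0$ and $\mathbf U_i=\mathrm{span}(u_1,\dots,u_i)$. If $L$ and $L_c$ are $(\mathbf U_i,\epsilon_i)$-similar, then $\|\Pi^\perp u_i\|_2^2\le\epsilon_i$.
   Context: For PSD $M$, $\|y\|_M=\sqrt{y^\top My}$. $L_c$ and $L$ are $(\mathbf R,\epsilon)$-similar if $\epsilon\ge0$ and $\|x-P^+Px\|_L\le\epsilon\|x\|_L$ for all $x\in\mathbf R$. *)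

theory Defs
  imports "HOL-Analysis.Analysis"
begin

definition pinv :: "real^'a^'b \<Rightarrow> real^'b^'a" where
  "pinv A = (THE X. A ** X ** A = A \<and> X ** A ** X = X \<and>
                    transpose (A ** X) = A ** X \<and> transpose (X ** A) = X ** A)"

definition Mnorm :: "real^'n^'n \<Rightarrow> real^'n \<Rightarrow> real" where
  "Mnorm M y = sqrt (y \<bullet> (M *v y))"

text \<open>(R,eps)-similarity of Lc and L (w.r.t. the reduction matrix P).
  As in the paper, Lc is a parameter but only P and L enter the condition.\<close>
definition rsimilar ::
  "real^'N^'N \<Rightarrow> real^'n^'n \<Rightarrow> real^'N^'n \<Rightarrow> (real^'N) set \<Rightarrow> real \<Rightarrow> bool" where
  "rsimilar L Lc P R eps \<longleftrightarrow> eps \<ge> 0 \<and>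
     (\<forall>x\<in>R. Mnorm L (x - (pinv P ** P) *v x) \<le> eps * Mnorm L x)"

end

theory Submission
  imports Defs
begin

lemma inner_mv_transpose: "((C::real^'a^'b) *v u) \<bullet> w = u \<bullet> (transpose C *v w)"
  by (metis dot_lmul_matrix vector_transpose_matrix transpose_transpose)

lemma transpose_diff': "transpose ((A::real^'a^'b) - B) = transpose A - transpose B"
  by (simp add: transpose_def vec_eq_iff)

lemma mdl: "(A::real^'n^'m) ** (B - C) = A ** B - A ** C"
  by (simp add: matrix_matrix_mult_def vec_eq_iff sum_subtractf right_diff_distrib)

lemma mdr: "((B::real^'n^'m) - C) ** A = B ** A - C ** A"
  by (simp add: matrix_matrix_mult_def vec_eq_iff sum_subtractf left_diff_distrib)

lemma pinv_props:
  fixes P :: "real^'N^'n"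
  assumes fullrank: "rank P = CARD('n)"
  shows "P ** pinv P ** P = P \<and> pinv P ** P ** pinv P = pinv P \<and>
         transpose (P ** pinv P) = P ** pinv P \<and> transpose (pinv P ** P) = pinv P ** P"
proof -
  have injT: "inj ((*v) (transpose P))"
  proof -
    have "rank (transpose P) = CARD('n)" using fullrank rank_transpose by metis
    thus ?thesis using full_rank_injective by blast
  qed
  define Q where "Q = P ** transpose P"
  have Qsym: "transpose Q = Q" unfolding Q_def by (simp add: matrix_transpose_mul)
  have injQ: "inj ((*v) Q)"
  proof (rule linear_injective_0[THEN iffD2])
    show "linear ((*v) Q)" by (rule matrix_vector_mul_linear)
    show "\<forall>y. Q *v y = 0 \<longrightarrow> y = 0"
    proof (intro allI impI)
      fix y assume "Q *v y = 0"
      hence "y \<bullet> (Q *v y) = 0" by simp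
      moreover have "y \<bullet> (Q *v y) = (transpose P *v y) \<bullet> (transpose P *v y)"
        unfolding Q_def matrix_vector_mul_assoc[symmetric]
        by (metis inner_mv_transpose inner_commute transpose_transpose)
      ultimately have "transpose P *v y = 0" by simp
      thus "y = 0" using injT by (metis inj_eq matrix_vector_mult_0_right)
    qed
  qed
  obtain B where BQ: "B ** Q = mat 1"
    using injQ matrix_left_invertible_injective by blast
  have QB: "Q ** B = mat 1" using BQ matrix_left_right_inverse by blast
  have Bsym: "transpose B = B"
  proof -
    have "transpose B ** Q = mat 1"
      using QB by (metis Qsym matrix_transpose_mul transpose_mat)
    hence "transpose B = transpose B ** (Q ** B)" using QB by simp
    also have "\<dots> = B" by (metis \<open>transpose B ** Q = mat 1\<close> matrix_mul_assoc matrix_mul_lid)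
    finally show ?thesis .
  qed
  define X0 where "X0 = transpose P ** B"
  have PX0: "P ** X0 = mat 1" unfolding X0_def using QB Q_def by (simp add: matrix_mul_assoc)
  let ?C = "\<lambda>X. P ** X ** P = P \<and> X ** P ** X = X \<and>
                    transpose (P ** X) = P ** X \<and> transpose (X ** P) = X ** P"
  have ex: "?C X0"
  proof -
    have "transpose (X0 ** P) = X0 ** P"
      unfolding X0_def by (simp add: matrix_transpose_mul Bsym matrix_mul_assoc)
    thus ?thesis using PX0 by (simp add: matrix_mul_assoc[symmetric] transpose_mat)
  qed
  have uniq: "X = X0" if "?C X" for X
  proof -
    have PXP: "P ** X ** P = P" and sy: "transpose (X ** P) = X ** P" using that by auto
    have "P ** X = P ** X ** (P ** X0)" using PX0 by simp
    also have "\<dots> = P ** X0" using PXP by (simp add: matrix_mul_assoc)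
    finally have PX: "P ** X = mat 1" using PX0 by simp
    have "X = X ** (P ** X)" using PX by simp
    also have "\<dots> = transpose (X ** P) ** X" using sy by (simp add: matrix_mul_assoc)
    also have "\<dots> = transpose P ** (transpose X ** X)"
      by (simp add: matrix_transpose_mul matrix_mul_assoc)
    finally have XZ: "X = transpose P ** (transpose X ** X)" .
    hence "Q ** (transpose X ** X) = mat 1" using PX unfolding Q_def
      by (metis matrix_mul_assoc)
    hence "transpose X ** X = B" using BQ
      by (metis matrix_mul_assoc matrix_mul_lid matrix_mul_rid)
    thus ?thesis using XZ X0_def by simp
  qed
  have "?C (pinv P)" unfolding pinv_def
    by (rule theI[of ?C X0, OF ex uniq])
  thus ?thesis by simp
qed

theorem lemma2:
  fixes L :: "real^'N^'N" and P :: "real^'N^'n"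
    and lam :: "nat \<Rightarrow> real" and u :: "nat \<Rightarrow> real^'N"
    and i :: nat and eps :: real
  assumes sym: "transpose L = L"
    and psd: "\<forall>x. 0 \<le> x \<bullet> (L *v x)"
    and eig: "\<forall>k\<in>{1..CARD('N)}. L *v u k = lam k *\<^sub>R u k"
    and orth: "\<forall>j\<in>{1..CARD('N)}. \<forall>k\<in>{1..CARD('N)}. u j \<bullet> u k = (if j = k then 1 else 0)"
    and sorted: "\<forall>j\<in>{1..CARD('N)}. \<forall>k\<in>{1..CARD('N)}. j \<le> k \<longrightarrow> lam j \<le> lam k"
    and fullrank: "rank P = CARD('n)"
    and i: "i \<in> {1..CARD('N)}" and pos: "lam i > 0"
    and sim: "rsimilar L (transpose (pinv P) ** L ** pinv P) P (span (u ` {1..i})) eps"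
  shows "(norm ((mat 1 - pinv P ** P) *v u i))\<^sup>2 \<le> eps"
proof -
  define A where "A = pinv P ** P"
  define C where "C = mat 1 - A"
  define v where "v = u i"
  define l where "l = lam i"
  have pp: "P ** pinv P ** P = P" "pinv P ** P ** pinv P = pinv P"
     "transpose (pinv P ** P) = pinv P ** P" using pinv_props[OF fullrank] by auto
  have Asym: "transpose A = A" using pp A_def by simp
  have AA: "A ** A = A" unfolding A_def using pp by (metis matrix_mul_assoc)
  have Csym: "transpose C = C" unfolding C_def using Asym
    by (metis transpose_mat transpose_diff')
  have CC: "C ** C = C" unfolding C_def using AA
    by (simp add: mdl mdr)
  define x where "x = C *v v"
  have vv: "v \<bullet> v = 1" using orth i v_def by auto
  have Lv: "L *v v = l *\<^sub>R v" using eig i v_def l_def by auto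
  have l0: "l > 0" using pos l_def by simp
  have xx: "x \<bullet> x = x \<bullet> v"
  proof -
    have "x \<bullet> x = v \<bullet> (transpose C *v (C *v v))" unfolding x_def by (rule inner_mv_transpose)
    also have "\<dots> = v \<bullet> x" using Csym CC by (simp add: matrix_vector_mul_assoc x_def)
    finally show ?thesis by (simp add: inner_commute)
  qed
  define a where "a = x \<bullet> (L *v x)"
  define s where "s = x \<bullet> v"
  have vLx: "v \<bullet> (L *v x) = l * s"
  proof -
    have "v \<bullet> (L *v x) = (L *v v) \<bullet> x" using sym by (metis inner_mv_transpose inner_commute)
    thus ?thesis using Lv s_def by (simp add: inner_commute)
  qed
  have key: "l * s^2 \<le> a"
  proof -
    have "0 \<le> (x - s *\<^sub>R v) \<bullet> (L *v (x - s *\<^sub>R v))" using psd by blast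
    also have "\<dots> = a - 2 * s * (l * s) + s^2 * l"
      using vLx Lv vv s_def unfolding a_def
      by (simp add: matrix_vector_mult_diff_distrib matrix_vector_mult_scaleR inner_diff_left
          inner_diff_right inner_commute[of x v] algebra_simps power2_eq_square)
    finally show ?thesis by (simp add: algebra_simps power2_eq_square)
  qed
  have vin: "v \<in> span (u ` {1..i})" unfolding v_def using i by (intro span_base) auto
  have e0: "eps \<ge> 0" and sb: "Mnorm L (v - A *v v) \<le> eps * Mnorm L v"
    using sim vin unfolding rsimilar_def A_def by auto
  have "v - A *v v = x" unfolding x_def C_def
    by (simp add: matrix_vector_mult_diff_rdistrib)
  hence "sqrt a \<le> eps * sqrt l" using sb Lv vv unfolding Mnorm_def a_def by simp
  hence "(sqrt a)^2 \<le> (eps * sqrt l)^2"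
    using psd a_def by (intro power_mono) auto
  hence "a \<le> eps^2 * l" using psd a_def l0 by (simp add: power_mult_distrib)
  hence "l * s^2 \<le> l * eps^2" using key by (simp add: algebra_simps)
  hence "s^2 \<le> eps^2" using l0 by simp
  hence "s \<le> eps" using e0 by (rule power2_le_imp_le)
  moreover have "(norm x)^2 = s" using xx s_def by (simp add: power2_norm_eq_inner)
  ultimately show ?thesis unfolding x_def C_def A_def v_def by simp
qed

end
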